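(* Fix integers $m\ge 1$ and $\theta\in(0,1]$, and let $f$ be a homogeneous voting rule. Suppose there is a neighborhood $U$ of the expected normalized profile $\hat P$ (in the space of normalized continuous profiles on candidates $\{1,\dots,m\}$, with the topology of weight vectors in $\mathbb R^{m!}$) such that $f$ is not CM in any continuous profile of $U$. Then $\lim_{n\to\infty}\rho(f,m,n,\theta)=0$.
   Context: A ranking over a finite candidate set is a strict total order on it. A discrete profile $P$ consists of a finite nonempty candidate set, a finite nonempty voter set of size $n$, and a ranking $P_v$ for each voter $v$; $w(p,P)$ is the number of voters with ranking $p$, $w(P)=n$. A continuous profile consists of a candidate set, a total weight $w(P)>0$ and weights $w(p,P)\ge0$ for each ranking $p$ summing to $w(P)$. The normalized profile $\bar P$ has weights $w(p,P)/w(P)$. Profiles on a fixed candidate set are identified with their weight vectors in $\mathbb R^{m!}$. A voting rule maps every profile (discrete or continuous) to one of its candidates; it is homogeneous if $f(P)=f(\bar P)$ always. CM (discrete): $f$ is CM in discrete $P$ if there is a discrete $Q$ with the same candidates and voters, $f(Q)\ne f(P)$, and every voter $v$ with $Q_v\ne P_v$ prefers $f(Q)$ to $f(P)$ according to $P_v$. CM (continuous): $f$ is CM in continuous $P$ if there is a continuous $Q$ with the same candidates and total weight, $f(Q)\ne f(P)$, and every ranking $p$ with $w(p,Q)<w(p,P)$ prefers $f(Q)$ to $f(P)$. Perturbed Culture with parameters $m,n\ge1$ and $\theta\in(0,1]$: a random discrete profile with candidates $\{1,\dots,m\}$ and voters $\{1,\dots,n\}$, where each voter independently has ranking $1\succ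 2\succ\cdots\succ m$ with probability $\theta$ and a uniformly random ranking with probability $1-\theta$. The expected normalized profile $\hat P$ is the continuous profile of total weight $1$ in which $1\succ\cdots\succ m$ has weight $\theta+\frac{1-\theta}{m!}$ and every other ranking has weight $\frac{1-\theta}{m!}$. The CM rate $\rho(f,m,n,\theta)$ is the probability that $f$ is CM in a profile drawn from this model. *)

theory Defs
  imports "HOL-Analysis.Analysis" "HOL-Combinatorics.Multiset_Permutations"
begin

text \<open>Candidates are 1,...,m. A ranking is a list enumerating all candidates without
repetition, best first.\<close>

definition rankings :: "nat \<Rightarrow> nat list set" where
  "rankings m = permutations_of_set {1..m}"

definition prefers :: "nat list \<Rightarrow> nat \<Rightarrow> nat \<Rightarrow> bool" where
  "prefers p a b \<longleftrightarrow> (\<exists>i j. i < j \<and> j < length p \<and> p ! i = a \<and> p ! j = b)"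

definition discrete_profile :: "nat \<Rightarrow> nat \<Rightarrow> nat list list \<Rightarrow> bool" where
  "discrete_profile m n P \<longleftrightarrow> length P = n \<and> n \<ge> 1 \<and> (\<forall>v<n. P ! v \<in> rankings m)"

definition total_weight :: "nat \<Rightarrow> (nat list \<Rightarrow> real) \<Rightarrow> real" where
  "total_weight m w = (\<Sum>p\<in>rankings m. w p)"

definition cont_profile :: "nat \<Rightarrow> (nat list \<Rightarrow> real) \<Rightarrow> bool" where
  "cont_profile m w \<longleftrightarrow> (\<forall>p. w p \<ge> 0) \<and> (\<forall>p. p \<notin> rankings m \<longrightarrow> w p = 0)
     \<and> total_weight m w > 0"

definition normalize :: "nat \<Rightarrow> (nat list \<Rightarrow> real) \<Rightarrow> (nat list \<Rightarrow> real)" where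
  "normalize m w = (\<lambda>p. w p / total_weight m w)"

definition disc_weights :: "nat list list \<Rightarrow> (nat list \<Rightarrow> real)" where
  "disc_weights P = (\<lambda>p. real (card {v. v < length P \<and> P ! v = p}))"

definition voting_rule :: "nat \<Rightarrow> (nat list list \<Rightarrow> nat) \<Rightarrow> ((nat list \<Rightarrow> real) \<Rightarrow> nat) \<Rightarrow> bool" where
  "voting_rule m fd fc \<longleftrightarrow>
     (\<forall>n P. discrete_profile m n P \<longrightarrow> fd P \<in> {1..m}) \<and>
     (\<forall>w. cont_profile m w \<longrightarrow> fc w \<in> {1..m})"

definition homogeneous :: "nat \<Rightarrow> (nat list list \<Rightarrow> nat) \<Rightarrow> ((nat list \<Rightarrow> real) \<Rightarrow> nat) \<Rightarrow> bool" where
  "homogeneous m fd fc \<longleftrightarrow>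
     (\<forall>n P. discrete_profile m n P \<longrightarrow> fd P = fc (normalize m (disc_weights P))) \<and>
     (\<forall>w. cont_profile m w \<longrightarrow> fc w = fc (normalize m w))"

definition CM_disc :: "nat \<Rightarrow> (nat list list \<Rightarrow> nat) \<Rightarrow> nat list list \<Rightarrow> bool" where
  "CM_disc m fd P \<longleftrightarrow> (\<exists>Q. discrete_profile m (length P) Q \<and> fd Q \<noteq> fd P \<and>
     (\<forall>v < length P. Q ! v \<noteq> P ! v \<longrightarrow> prefers (P ! v) (fd Q) (fd P)))"

definition CM_cont :: "nat \<Rightarrow> ((nat list \<Rightarrow> real) \<Rightarrow> nat) \<Rightarrow> (nat list \<Rightarrow> real) \<Rightarrow> bool" where
  "CM_cont m fc w \<longleftrightarrow> (\<exists>q. cont_profile m q \<and> total_weight m q = total_weight m w \<and>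
     fc q \<noteq> fc w \<and>
     (\<forall>p\<in>rankings m. q p < w p \<longrightarrow> prefers p (fc q) (fc w)))"

definition pc_weight :: "nat \<Rightarrow> real \<Rightarrow> nat list \<Rightarrow> real" where
  "pc_weight m \<theta> p = (if p \<in> rankings m then
      (if p = [1..<m+1] then \<theta> else 0) + (1 - \<theta>) / fact m else 0)"

definition expected_profile :: "nat \<Rightarrow> real \<Rightarrow> (nat list \<Rightarrow> real)" where
  "expected_profile m \<theta> = pc_weight m \<theta>"

definition CM_rate :: "(nat list list \<Rightarrow> nat) \<Rightarrow> nat \<Rightarrow> nat \<Rightarrow> real \<Rightarrow> real" where
  "CM_rate fd m n \<theta> =
     (\<Sum>P\<in>{P. discrete_profile m n P \<and> CM_disc m fd P}. \<Prod>v<n. pc_weight m \<theta> (P ! v))"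

end

theory Submission
  imports Defs
begin

definition LL :: "nat list set \<Rightarrow> nat \<Rightarrow> nat list list set" where
  "LL R n = {xs. set xs \<subseteq> R \<and> length xs = n}"

definition Ex :: "nat list set \<Rightarrow> (nat list \<Rightarrow> real) \<Rightarrow> nat \<Rightarrow> (nat list list \<Rightarrow> real) \<Rightarrow> real" where
  "Ex R \<pi> n g = (\<Sum>P\<in>LL R n. (\<Prod>v<n. \<pi> (P ! v)) * g P)"

lemma Ex_0: "Ex R \<pi> 0 g = g []"
proof -
  have "LL R 0 = {[]}" by (auto simp: LL_def)
  then show ?thesis by (simp add: Ex_def)
qed

lemma Ex_Suc:
  assumes "finite R"
  shows "Ex R \<pi> (Suc n) g = (\<Sum>x\<in>R. \<pi> x * Ex R \<pi> n (\<lambda>P. g (x#P)))"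
proof -
  have fin: "finite (LL R n)" using assms by (simp add: LL_def finite_lists_length_eq)
  have inj: "inj_on (\<lambda>(xs, n). n#xs) (LL R n \<times> R)" by (auto simp: inj_on_def)
  have "Ex R \<pi> (Suc n) g = (\<Sum>(P,x)\<in>LL R n \<times> R. (\<Prod>v<Suc n. \<pi> ((x#P) ! v)) * g (x#P))"
    unfolding Ex_def LL_def lists_length_Suc_eq
    by (subst sum.reindex[OF inj[unfolded LL_def]]) (simp add: case_prod_beta)
  also have "\<dots> = (\<Sum>(P,x)\<in>LL R n \<times> R. \<pi> x * ((\<Prod>v<n. \<pi> (P ! v)) * g (x#P)))"
  proof (rule sum.cong[OF refl], clarify)
    fix P x
    have e: "(\<Prod>v<Suc n. \<pi> ((x#P) ! v)) = \<pi> x * (\<Prod>v<n. \<pi> (P ! v))"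
      by (simp only: prod.lessThan_Suc_shift) simp
    show "(\<Prod>v<Suc n. \<pi> ((x#P) ! v)) * g (x#P) = \<pi> x * ((\<Prod>v<n. \<pi> (P ! v)) * g (x#P))"
      by (simp only: e mult.assoc)
  qed
  also have "\<dots> = (\<Sum>P\<in>LL R n. \<Sum>x\<in>R. \<pi> x * ((\<Prod>v<n. \<pi> (P ! v)) * g (x#P)))"
    by (rule sum.cartesian_product[symmetric])
  also have "\<dots> = (\<Sum>x\<in>R. \<pi> x * Ex R \<pi> n (\<lambda>P. g (x#P)))"
    by (subst sum.swap) (simp add: Ex_def sum_distrib_left)
  finally show ?thesis .
qed

lemma Ex_one:
  assumes "finite R" "(\<Sum>x\<in>R. \<pi> x) = 1"
  shows "Ex R \<pi> n (\<lambda>_. 1) = 1"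
  by (induction n) (simp_all add: Ex_0 Ex_Suc assms)

lemma Ex_add: "Ex R \<pi> n (\<lambda>P. g P + h P) = Ex R \<pi> n g + Ex R \<pi> n h"
  unfolding Ex_def by (simp add: distrib_left sum.distrib)

lemma Ex_cmult: "Ex R \<pi> n (\<lambda>P. c * g P) = c * Ex R \<pi> n g"
  unfolding Ex_def by (simp add: sum_distrib_left mult.left_commute)


lemma Ex_const1:
  assumes "finite R" "(\<Sum>x\<in>R. \<pi> x) = 1"
  shows "Ex R \<pi> n (\<lambda>P. c) = c"
proof -
  have "Ex R \<pi> n (\<lambda>P. c * 1) = c * Ex R \<pi> n (\<lambda>_. 1)" by (rule Ex_cmult)
  then show ?thesis using Ex_one[OF assms, of n] by simp
qed

lemma Ex_lin:
  assumes "finite R" "(\<Sum>x\<in>R. \<pi> x) = 1" "(\<Sum>x\<in>R. \<pi> x * a x) = 0"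
  shows "Ex R \<pi> n (\<lambda>P. sum_list (map a P)) = 0"
proof (induction n)
  case 0 then show ?case by (simp add: Ex_0)
next
  case (Suc n)
  have "Ex R \<pi> n (\<lambda>P. a x + sum_list (map a P)) = a x" for x
  proof -
    have "Ex R \<pi> n (\<lambda>P. a x + sum_list (map a P)) = a x + Ex R \<pi> n (\<lambda>P. sum_list (map a P))"
      by (simp only: Ex_add Ex_const1[OF assms(1,2)])
    then show ?thesis using Suc by simp
  qed
  then have "Ex R \<pi> (Suc n) (\<lambda>P. sum_list (map a P)) = (\<Sum>x\<in>R. \<pi> x * a x)"
    using assms(1) by (simp add: Ex_Suc)
  then show ?case using assms(3) by simp
qed

lemma Ex_sq:
  assumes "finite R" "(\<Sum>x\<in>R. \<pi> x) = 1" "(\<Sum>x\<in>R. \<pi> x * a x) = 0"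
  shows "Ex R \<pi> n (\<lambda>P. (sum_list (map a P))^2) = real n * (\<Sum>x\<in>R. \<pi> x * (a x)^2)"
proof (induction n)
  case 0 then show ?case by (simp add: Ex_0)
next
  case (Suc n)
  let ?V = "(\<Sum>x\<in>R. \<pi> x * (a x)^2)"
  let ?S = "\<lambda>P. sum_list (map a P)"
  have "Ex R \<pi> n (\<lambda>P. (a x + ?S P)^2) = (a x)^2 + real n * ?V" for x
  proof -
    have f: "(\<lambda>P. (a x + ?S P)^2) = (\<lambda>P. (a x)^2 + ((2 * a x) * ?S P + (?S P)^2))"
      by (rule ext) (simp add: power2_eq_square algebra_simps)
    have "Ex R \<pi> n (\<lambda>P. (a x + ?S P)^2) = (a x)^2
       + ((2 * a x) * Ex R \<pi> n ?S + Ex R \<pi> n (\<lambda>P. (?S P)^2))"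
      unfolding f by (simp only: Ex_add Ex_const1[OF assms(1,2)] Ex_cmult)
    then show ?thesis using Suc Ex_lin[OF assms] by simp
  qed
  then have "Ex R \<pi> (Suc n) (\<lambda>P. (?S P)^2) = (\<Sum>x\<in>R. \<pi> x * ((a x)^2 + real n * ?V))"
    using assms(1) by (simp add: Ex_Suc)
  also have "\<dots> = (\<Sum>x\<in>R. \<pi> x * (a x)^2 + (real n * ?V) * \<pi> x)"
    by (rule sum.cong[OF refl]) (simp add: distrib_left)
  also have "\<dots> = ?V + (real n * ?V) * (\<Sum>x\<in>R. \<pi> x)"
    by (simp only: sum.distrib sum_distrib_left)
  also have "\<dots> = real (Suc n) * ?V"
    using assms(2) by (simp add: algebra_simps)
  finally show ?case .
qed

lemma Ex_mono:
  assumes "finite R" "\<And>x. x \<in> R \<Longrightarrow> \<pi> x \<ge> 0" "\<And>P. P \<in> LL R n \<Longrightarrow> g P \<le> h P"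
  shows "Ex R \<pi> n g \<le> Ex R \<pi> n h"
  unfolding Ex_def
proof (rule sum_mono)
  fix P assume P: "P \<in> LL R n"
  have "(\<Prod>v<n. \<pi> (P ! v)) \<ge> 0"
  proof (rule prod_nonneg)
    fix v assume "v \<in> {..<n}"
    then have "P ! v \<in> set P" using P nth_mem[of v P] by (simp add: LL_def)
    then have "P ! v \<in> R" using P by (auto simp: LL_def)
    then show "\<pi> (P ! v) \<ge> 0" using assms(2) by blast
  qed
  then show "(\<Prod>v<n. \<pi> (P ! v)) * g P \<le> (\<Prod>v<n. \<pi> (P ! v)) * h P"
    using assms(3)[OF P] by (simp add: mult_left_mono)
qed


lemma disc_weights_alt: "disc_weights P p = real (length (filter (\<lambda>y. y = p) P))"
  by (simp add: disc_weights_def length_filter_conv_card)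

lemma sum_count:
  assumes "finite R" "set P \<subseteq> R"
  shows "(\<Sum>p\<in>R. real (length (filter (\<lambda>y. y = p) P))) = real (length P)"
  using assms(2)
proof (induction P)
  case Nil then show ?case by simp
next
  case (Cons a P)
  have "(\<Sum>p\<in>R. real (length (filter (\<lambda>y. y = p) (a#P))))
      = (\<Sum>p\<in>R. (if a = p then 1 else 0) + real (length (filter (\<lambda>y. y = p) P)))"
    by (intro sum.cong) auto
  also have "\<dots> = 1 + real (length P)"
    using Cons assms(1) by (simp add: sum.distrib)
  finally show ?case by simp
qed

lemma dp_set:
  assumes "discrete_profile m n P"
  shows "set P \<subseteq> rankings m" "length P = n" "n \<ge> 1"
  using assms by (auto simp: discrete_profile_def in_set_conv_nth)

lemma fin_rankings: "finite (rankings m)"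
  by (simp add: rankings_def)

lemma tw_disc:
  assumes "discrete_profile m n P"
  shows "total_weight m (disc_weights P) = real n"
  using sum_count[OF fin_rankings dp_set(1)[OF assms]] dp_set(2)[OF assms]
  by (simp add: total_weight_def disc_weights_alt)

lemma norm_ok:
  assumes "discrete_profile m n P"
  shows "cont_profile m (normalize m (disc_weights P)) \<and> total_weight m (normalize m (disc_weights P)) = 1"
proof -
  have n: "real n > 0" using dp_set(3)[OF assms] by simp
  have z: "disc_weights P p = 0" if "p \<notin> rankings m" for p
    using that dp_set(1)[OF assms] by (auto simp: disc_weights_alt filter_empty_conv)
  have t: "total_weight m (normalize m (disc_weights P)) = 1"
    using n tw_disc[OF assms]
    by (simp add: total_weight_def normalize_def sum_divide_distrib[symmetric])
  show ?thesis
    unfolding cont_profile_def using t z tw_disc[OF assms]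
    by (simp add: normalize_def disc_weights_def)
qed

lemma disc_CM:
  assumes hom: "homogeneous m fd fc" and dp: "discrete_profile m n P" and cm: "CM_disc m fd P"
  shows "CM_cont m fc (normalize m (disc_weights P))"
proof -
  have lP: "length P = n" using dp_set[OF dp] by simp
  obtain Q where dQ: "discrete_profile m (length P) Q" and ne: "fd Q \<noteq> fd P"
    and pr: "\<forall>v < length P. Q ! v \<noteq> P ! v \<longrightarrow> prefers (P ! v) (fd Q) (fd P)"
    using cm unfolding CM_disc_def by blast
  have lQ: "length Q = n" using dp_set[OF dQ] lP by simp
  have fQ: "fc (normalize m (disc_weights Q)) = fd Q" using hom dQ by (simp add: homogeneous_def)
  have fP: "fc (normalize m (disc_weights P)) = fd P" using hom dp by (simp add: homogeneous_def)
  have n: "real n > 0" using dp_set(3)[OF dp] by simp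
  show ?thesis unfolding CM_cont_def
  proof (intro exI[of _ "normalize m (disc_weights Q)"] conjI ballI impI)
    show "cont_profile m (normalize m (disc_weights Q))" using norm_ok[OF dQ] by simp
    show "total_weight m (normalize m (disc_weights Q)) = total_weight m (normalize m (disc_weights P))"
      using norm_ok[OF dQ] norm_ok[OF dp] by simp
    show "fc (normalize m (disc_weights Q)) \<noteq> fc (normalize m (disc_weights P))"
      using fQ fP ne by simp
    fix p assume "p \<in> rankings m"
      and lt: "normalize m (disc_weights Q) p < normalize m (disc_weights P) p"
    have "disc_weights Q p < disc_weights P p"
      using lt n tw_disc[OF dQ] tw_disc[OF dp] lP by (simp add: normalize_def divide_less_cancel)
    then have clt: "card {v. v < n \<and> Q ! v = p} < card {v. v < n \<and> P ! v = p}"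
      using lP lQ by (simp add: disc_weights_def)
    have "\<exists>v<n. P ! v = p \<and> Q ! v \<noteq> p"
    proof (rule ccontr)
      assume "\<not> ?thesis"
      then have "{v. v < n \<and> P ! v = p} \<subseteq> {v. v < n \<and> Q ! v = p}" by auto
      then have "card {v. v < n \<and> P ! v = p} \<le> card {v. v < n \<and> Q ! v = p}"
        by (intro card_mono) auto
      then show False using clt by simp
    qed
    then obtain v where "v < n" "P ! v = p" "Q ! v \<noteq> p" by blast
    then show "prefers p (fc (normalize m (disc_weights Q))) (fc (normalize m (disc_weights P)))"
      using pr lP fQ fP by auto
  qed
qed

theorem lemma3p1:
  fixes m :: nat and \<theta> :: real
    and fd :: "nat list list \<Rightarrow> nat" and fc :: "(nat list \<Rightarrow> real) \<Rightarrow> nat"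
  assumes "m \<ge> 1" and "0 < \<theta>" and "\<theta> \<le> 1"
    and "voting_rule m fd fc" and "homogeneous m fd fc"
    and "\<exists>\<epsilon>>0. \<forall>q. cont_profile m q \<and> total_weight m q = 1 \<and>
            (\<forall>p\<in>rankings m. \<bar>q p - expected_profile m \<theta> p\<bar> < \<epsilon>)
            \<longrightarrow> \<not> CM_cont m fc q"
  shows "(\<lambda>n. CM_rate fd m n \<theta>) \<longlonglongrightarrow> 0"
proof -
  obtain \<epsilon> where ep: "\<epsilon> > 0" and H: "\<And>q. cont_profile m q \<Longrightarrow> total_weight m q = 1 \<Longrightarrow>
            (\<forall>p\<in>rankings m. \<bar>q p - expected_profile m \<theta> p\<bar> < \<epsilon>) \<Longrightarrow> \<not> CM_cont m fc q"
    using assms(6) by blast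
  define R where "R = rankings m"
  define \<pi> where "\<pi> = pc_weight m \<theta>"
  have finR: "finite R" by (simp add: R_def fin_rankings)
  have cardR: "card R = fact m" by (simp add: R_def rankings_def)
  have idR: "[1..<m+1] \<in> R" by (auto simp: R_def rankings_def permutations_of_set_def)
  have pos: "\<pi> x \<ge> 0" for x using assms(2,3) by (simp add: \<pi>_def pc_weight_def)
  have sum1: "(\<Sum>x\<in>R. \<pi> x) = 1"
  proof -
    have "(\<Sum>x\<in>R. \<pi> x) = (\<Sum>x\<in>R. (if x = [1..<m+1] then \<theta> else 0) + (1 - \<theta>) / fact m)"
      by (intro sum.cong) (auto simp: \<pi>_def pc_weight_def R_def)
    also have "\<dots> = \<theta> + real (fact m) * ((1 - \<theta>) / fact m)"
      using finR idR by (simp add: sum.distrib cardR)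
    also have "\<dots> = 1" by simp
    finally show ?thesis .
  qed
  have le1: "\<pi> p \<le> 1" if "p \<in> R" for p
    using member_le_sum[of p R \<pi>] that finR pos sum1 by auto
  define a where "a p x = (if x = p then 1 else 0) - \<pi> p" for p x
  define ind where "ind n p P = (if real n * \<epsilon> \<le> \<bar>sum_list (map (a p) P)\<bar> then 1 else (0::real))" for n p P
  have a_sum: "(\<Sum>x\<in>R. \<pi> x * a p x) = 0" if "p \<in> R" for p
  proof -
    have "(\<Sum>x\<in>R. \<pi> x * a p x) = (\<Sum>x\<in>R. (if x = p then \<pi> p else 0)) - \<pi> p * (\<Sum>x\<in>R. \<pi> x)"
    proof -
      have "\<pi> x * a p x = (if x = p then \<pi> p else 0) - \<pi> x * \<pi> p" for x
        by (simp add: a_def algebra_simps)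
      then show ?thesis by (simp add: sum_subtractf sum_distrib_left mult.commute)
    qed
    then show ?thesis using that finR sum1 by simp
  qed
  have a_var: "(\<Sum>x\<in>R. \<pi> x * (a p x)^2) \<le> 1" if "p \<in> R" for p
  proof -
    have "(\<Sum>x\<in>R. \<pi> x * (a p x)^2) \<le> (\<Sum>x\<in>R. \<pi> x * 1)"
    proof (rule sum_mono)
      fix x assume "x \<in> R"
      have "(a p x)^2 \<le> 1" using pos[of p] le1[OF that]
        by (auto simp: a_def abs_square_le_1)
      then show "\<pi> x * (a p x)^2 \<le> \<pi> x * 1" using pos[of x] by (intro mult_left_mono) auto
    qed
    then show ?thesis using sum1 by simp
  qed
  have a_list: "sum_list (map (a p) P) = real (length (filter (\<lambda>y. y = p) P)) - real (length P) * \<pi> p" for p P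
    by (induction P) (auto simp: a_def algebra_simps)
  have cheb: "Ex R \<pi> n (ind n p) \<le> 1 / (real n * \<epsilon>^2)" if "p \<in> R" "n \<ge> 1" for n p
  proof -
    have np: "real n * \<epsilon> > 0" using that ep by simp
    have "Ex R \<pi> n (ind n p) \<le> Ex R \<pi> n (\<lambda>P. (sum_list (map (a p) P))^2 / (real n * \<epsilon>)^2)"
    proof (rule Ex_mono[OF finR pos])
      fix P
      show "ind n p P \<le> (sum_list (map (a p) P))^2 / (real n * \<epsilon>)^2"
      proof (cases "real n * \<epsilon> \<le> \<bar>sum_list (map (a p) P)\<bar>")
        case True
        then have "(real n * \<epsilon>)^2 \<le> (sum_list (map (a p) P))^2"
          using np by (metis abs_le_square_iff abs_of_pos)
        moreover have "(real n * \<epsilon>)^2 > 0" using np by (rule zero_less_power)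
        ultimately show ?thesis using True by (simp add: ind_def le_divide_eq)
      qed (simp add: ind_def)
    qed
    also have "\<dots> = Ex R \<pi> n (\<lambda>P. (sum_list (map (a p) P))^2) / (real n * \<epsilon>)^2"
      by (simp add: Ex_def sum_divide_distrib)
    also have "\<dots> = real n * (\<Sum>x\<in>R. \<pi> x * (a p x)^2) / (real n * \<epsilon>)^2"
      using Ex_sq[OF finR sum1 a_sum[OF that(1)]] by simp
    also have "\<dots> \<le> real n * 1 / (real n * \<epsilon>)^2"
      using a_var[OF that(1)] np by (intro divide_right_mono mult_left_mono) auto
    also have "\<dots> = 1 / (real n * \<epsilon>^2)"
      using np by (simp add: power2_eq_square)
    finally show ?thesis .
  qed
  have bound: "CM_rate fd m n \<theta> \<le> (real (card R) / \<epsilon>^2) / real n" if n1: "n \<ge> 1" for n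
  proof -
    define C where "C = {P. discrete_profile m n P \<and> CM_disc m fd P}"
    define W where "W P = (\<Prod>v<n. \<pi> (P ! v))" for P
    have finL: "finite (LL R n)" using finR by (simp add: LL_def finite_lists_length_eq)
    have CL: "C \<subseteq> LL R n"
    proof
      fix P assume "P \<in> C"
      then have dp: "discrete_profile m n P" by (simp add: C_def)
      show "P \<in> LL R n" using dp_set(1)[OF dp] dp_set(2)[OF dp] by (simp add: LL_def R_def)
    qed
    have Wpos: "W P \<ge> 0" if "P \<in> LL R n" for P
      unfolding W_def by (intro prod_nonneg) (simp add: pos)
    have indpos: "ind n p P \<ge> 0" for p P by (simp add: ind_def)
    have one: "1 \<le> (\<Sum>p\<in>R. ind n p P)" if "P \<in> C" for P
    proof -
      have dp: "discrete_profile m n P" and cm: "CM_disc m fd P" using that by (auto simp: C_def)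
      have nc: "CM_cont m fc (normalize m (disc_weights P))" by (rule disc_CM[OF assms(5) dp cm])
      have no: "cont_profile m (normalize m (disc_weights P))" "total_weight m (normalize m (disc_weights P)) = 1"
        using norm_ok[OF dp] by auto
      have "\<not> (\<forall>p\<in>rankings m. \<bar>normalize m (disc_weights P) p - expected_profile m \<theta> p\<bar> < \<epsilon>)"
        using H[OF no] nc by blast
      then obtain p where pR0: "p \<in> rankings m"
        and ge0: "\<not> \<bar>normalize m (disc_weights P) p - expected_profile m \<theta> p\<bar> < \<epsilon>" by blast
      have pR: "p \<in> R" using pR0 by (simp add: R_def)
      have ge: "\<epsilon> \<le> \<bar>disc_weights P p / real n - \<pi> p\<bar>"
        using ge0 tw_disc[OF dp] unfolding normalize_def expected_profile_def \<pi>_def by simp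
      have nn: "real n > 0" using n1 by simp
      have "disc_weights P p / real n - \<pi> p = sum_list (map (a p) P) / real n"
        using nn dp_set(2)[OF dp] by (simp add: a_list disc_weights_alt field_simps)
      then have "\<epsilon> \<le> \<bar>sum_list (map (a p) P)\<bar> / real n" using ge nn by simp
      then have "real n * \<epsilon> \<le> \<bar>sum_list (map (a p) P)\<bar>" using nn by (simp add: field_simps)
      then have "ind n p P = 1" by (simp add: ind_def)
      then show ?thesis using member_le_sum[of p R "\<lambda>p. ind n p P"] pR finR indpos by auto
    qed
    have "CM_rate fd m n \<theta> = (\<Sum>P\<in>C. W P)"
      by (simp add: CM_rate_def C_def W_def \<pi>_def)
    also have "\<dots> \<le> (\<Sum>P\<in>C. W P * (\<Sum>p\<in>R. ind n p P))"
    proof (rule sum_mono)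
      fix P assume "P \<in> C"
      then have "1 \<le> (\<Sum>p\<in>R. ind n p P)" "W P \<ge> 0" using one Wpos CL by auto
      then show "W P \<le> W P * (\<Sum>p\<in>R. ind n p P)" using mult_left_mono[of 1 _ "W P"] by simp
    qed
    also have "\<dots> \<le> (\<Sum>P\<in>LL R n. W P * (\<Sum>p\<in>R. ind n p P))"
      using CL finL Wpos indpos by (intro sum_mono2) (auto intro!: sum_nonneg mult_nonneg_nonneg)
    also have "\<dots> = (\<Sum>P\<in>LL R n. \<Sum>p\<in>R. W P * ind n p P)"
      by (simp add: sum_distrib_left)
    also have "\<dots> = (\<Sum>p\<in>R. \<Sum>P\<in>LL R n. W P * ind n p P)"
      by (rule sum.swap)
    also have "\<dots> = (\<Sum>p\<in>R. Ex R \<pi> n (ind n p))"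
      by (simp add: Ex_def W_def)
    also have "\<dots> \<le> (\<Sum>p\<in>R. 1 / (real n * \<epsilon>^2))"
      using cheb n1 by (intro sum_mono) auto
    also have "\<dots> = (real (card R) / \<epsilon>^2) / real n" by simp
    finally show ?thesis .
  qed
  have nonneg: "CM_rate fd m n \<theta> \<ge> 0" for n
    unfolding CM_rate_def by (intro sum_nonneg prod_nonneg) (simp add: pos[unfolded \<pi>_def])
  show ?thesis
  proof (rule tendsto_sandwich[of "\<lambda>_. 0" _ _ "\<lambda>n. (real (card R) / \<epsilon>^2) / real n"])
    show "\<forall>\<^sub>F n in sequentially. 0 \<le> CM_rate fd m n \<theta>" using nonneg by simp
    show "\<forall>\<^sub>F n in sequentially. CM_rate fd m n \<theta> \<le> (real (card R) / \<epsilon>^2) / real n"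
      using bound by (intro eventually_sequentiallyI[of 1]) auto
    show "(\<lambda>n. (real (card R) / \<epsilon>^2) / real n) \<longlonglongrightarrow> 0" by (rule lim_const_over_n)
  qed simp
qed

end
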